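(* Let $A\in P(n)$ and $B=A\circ\bar A$ (so $B_{ij}=|A_{ij}|^2$). Then: (1) there exists a vector $x\in\mathbb R^n$ with nonnegative entries, $\|x\|=1$, such that $\|A\circ xx^*\|_2=I(2,A)$; (2) for any such $x$, letting $J=\{i:x_i\neq0\}$ and $B_J$ the principal submatrix of $B$ indexed by $J$, $x$ is an eigenvector of $B\circ xx^*$ with eigenvalue $I(B_J)$.
   Context: $P(k)$ denotes positive semidefinite complex $k\times k$ matrices, $\circ$ the Hadamard product, $\bar A$ the entrywise complex conjugate, $\|\cdot\|_2$ the Frobenius norm. $I(2,A)=\min\{\|A\circ C\|_2: C\in P(n),\ \|C\|_2=1\}$. For $C\in P(k)$, with $P_k$ the all-ones $k\times k$ matrix, $I(C)=\max\{\lambda\ge0: C-\lambda P_k\ge0\}$. *)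

theory Defs
  imports "HOL-Analysis.Analysis"
begin

definition hadamard :: "complex^'n^'n \<Rightarrow> complex^'n^'n \<Rightarrow> complex^'n^'n" where
  "hadamard A C = (\<chi> i j. A$i$j * C$i$j)"

definition conj_mat :: "complex^'n^'n \<Rightarrow> complex^'n^'n" where
  "conj_mat A = (\<chi> i j. cnj (A$i$j))"

definition psd_on :: "'n::finite set \<Rightarrow> complex^'n^'n \<Rightarrow> bool" where
  "psd_on J M \<longleftrightarrow> (\<forall>i\<in>J. \<forall>j\<in>J. M$j$i = cnj (M$i$j)) \<and>
     (\<forall>v::complex^'n. 0 \<le> Re (\<Sum>i\<in>J. \<Sum>j\<in>J. cnj (v$i) * M$i$j * v$j))"

definition psd :: "complex^'n::finite^'n \<Rightarrow> bool" where
  "psd M \<longleftrightarrow> psd_on UNIV M"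

definition frob :: "complex^'n::finite^'n \<Rightarrow> real" where
  "frob M = sqrt (\<Sum>i\<in>UNIV. \<Sum>j\<in>UNIV. (cmod (M$i$j))^2)"

definition I2 :: "complex^'n::finite^'n \<Rightarrow> real" where
  "I2 A = Inf {frob (hadamard A C) | C. psd C \<and> frob C = 1}"

text \<open>I(C_J) = max { lambda >= 0 : C_J - lambda P_{|J|} >= 0 }, for the principal
  submatrix C_J of C indexed by J.\<close>
definition Isub :: "'n::finite set \<Rightarrow> complex^'n^'n \<Rightarrow> real" where
  "Isub J C = Sup {l::real. l \<ge> 0 \<and> psd_on J (\<chi> i j. C$i$j - complex_of_real l)}"

definition outer :: "real^'n \<Rightarrow> complex^'n^'n" where
  "outer x = (\<chi> i j. complex_of_real (x$i * x$j))"

end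

theory Submission
  imports Defs
begin


definition cin :: "complex^'n::finite \<Rightarrow> complex^'n \<Rightarrow> complex" where
  "cin u w = (\<Sum>i\<in>UNIV. cnj (u$i) * w$i)"
definition herm :: "complex^'n::finite^'n \<Rightarrow> bool" where
  "herm M \<longleftrightarrow> (\<forall>i j. M$j$i = cnj (M$i$j))"
definition cout :: "complex^'n::finite \<Rightarrow> complex^'n^'n" where
  "cout w = (\<chi> i j. w$i * cnj (w$j))"
definition qf :: "complex^'n::finite^'n \<Rightarrow> complex^'n \<Rightarrow> complex" where
  "qf M v = (\<Sum>i\<in>UNIV. \<Sum>j\<in>UNIV. cnj (v$i) * M$i$j * v$j)"

lemma psd_iff: "psd M \<longleftrightarrow> herm M \<and> (\<forall>v. 0 \<le> Re (qf M v))"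
  unfolding psd_def psd_on_def herm_def qf_def by auto

lemma normsq: "(norm (x::'a::real_normed_vector^'n))^2 = (\<Sum>i\<in>UNIV. (norm (x$i))^2)"
  by (simp add: norm_vec_def L2_set_def sum_nonneg)

lemma qf_cin: "qf M v = cin v (M *v v)"
  by (simp add: qf_def cin_def matrix_vector_mult_def sum_distrib_left mult.assoc)

lemma cin_self: "cin u u = of_real ((norm u)^2)"
  unfolding cin_def normsq of_real_sum
  apply (intro sum.cong refl)
  subgoal for x using complex_norm_square[of "u$x"] by (simp add: mult.commute)
  done

lemma cin_self_eq0: "cin u u = 0 \<Longrightarrow> u = 0"
  by (simp add: cin_self)

lemma cin_cnj: "cin w u = cnj (cin u w)"
  by (simp add: cin_def mult.commute)

lemma cin_add_right: "cin u (v + w) = cin u v + cin u w"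
  by (simp add: cin_def distrib_left sum.distrib)
lemma cin_add_left: "cin (u + v) w = cin u w + cin v w"
  by (simp add: cin_def distrib_right sum.distrib)
lemma cin_diff_right: "cin u (v - w) = cin u v - cin u w"
  by (simp add: cin_def right_diff_distrib sum_subtractf)
lemma cin_diff_left: "cin (u - v) w = cin u w - cin v w"
  by (simp add: cin_def left_diff_distrib sum_subtractf)
lemma cin_scale_right: "cin u (a *s w) = a * cin u w"
  by (simp add: cin_def sum_distrib_left mult.left_commute)
lemma cin_scale_left: "cin (a *s u) w = cnj a * cin u w"
  by (simp add: cin_def sum_distrib_left mult.assoc)
lemma cin_scaleR_right: "cin u (r *\<^sub>R w) = of_real r * cin u w"
  unfolding cin_def vector_scaleR_component by (simp add: scaleR_conv_of_real sum_distrib_left mult_ac)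
lemma cin_scaleR_left: "cin (r *\<^sub>R u) w = of_real r * cin u w"
  unfolding cin_def vector_scaleR_component by (simp add: scaleR_conv_of_real sum_distrib_left mult_ac)
lemma cin_zero_right[simp]: "cin u 0 = 0" by (simp add: cin_def)
lemma cin_zero_left[simp]: "cin 0 u = 0" by (simp add: cin_def)

lemma mv_scale: "M *v (a *s v) = a *s (M *v (v::complex^'n::finite))"
  by (simp add: vec_eq_iff matrix_vector_mult_def sum_distrib_left mult.left_commute)
lemma mv_scaleR: "M *v (r *\<^sub>R v) = r *\<^sub>R (M *v (v::complex^'n::finite))"
  by (simp add: vec_eq_iff matrix_vector_mult_def scaleR_sum_right)
lemma mv_diff: "M *v (v - w) = M *v v - M *v (w::complex^'n::finite)"
  by (simp add: vec_eq_iff matrix_vector_mult_def right_diff_distrib sum_subtractf)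

lemma herm_adj: "herm M \<Longrightarrow> cin u (M *v w) = cin (M *v u) w"
proof -
  assume h: "herm M"
  have c: "cnj (M$j$i) = M$i$j" for i j using h unfolding herm_def by (metis complex_cnj_cnj)
  have "cin u (M *v w) = (\<Sum>i\<in>UNIV. \<Sum>j\<in>UNIV. cnj (u$i) * M$i$j * w$j)"
    by (simp add: cin_def matrix_vector_mult_def sum_distrib_left mult.assoc)
  also have "\<dots> = (\<Sum>j\<in>UNIV. \<Sum>i\<in>UNIV. cnj (u$i) * M$i$j * w$j)"
    by (rule sum.swap)
  also have "\<dots> = cin (M *v u) w"
    unfolding cin_def matrix_vector_mult_def
    by (simp add: sum_distrib_left sum_distrib_right c mult_ac)
  finally show ?thesis .
qed

lemma qf_real: "herm M \<Longrightarrow> qf M v = of_real (Re (qf M v))"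
proof -
  assume h: "herm M"
  have "cnj (qf M v) = qf M v"
    using herm_adj[OF h, of v v] by (simp add: qf_cin cin_cnj[of "M *v v" v])
  then show ?thesis by (metis Reals_cnj_iff complex_is_Real_iff of_real_Re)
qed

lemma qf_scaleR: "qf M (r *\<^sub>R v) = of_real (r^2) * qf M v"
  by (simp add: qf_cin mv_scaleR cin_scaleR_left cin_scaleR_right power2_eq_square)

lemma quad_zero:
  fixes a b e :: real
  assumes "e > 0" "\<forall>t. \<bar>t\<bar> < e \<longrightarrow> 0 \<le> a*t + b*t^2"
  shows "a = 0"
proof (rule ccontr)
  assume a: "a \<noteq> 0"
  define d where "d = min (e/2) (\<bar>a\<bar>/(2*(\<bar>b\<bar>+1)))"
  have d: "d > 0" "d < e" "d \<le> \<bar>a\<bar>/(2*(\<bar>b\<bar>+1))" using a assms(1) by (auto simp: d_def)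
  define t where "t = - sgn a * d"
  have "\<bar>t\<bar> < e" using d a by (simp add: t_def abs_mult abs_sgn_eq)
  then have f1: "0 \<le> a*t + b*t^2" using assms by auto
  have f2: "a*t = - \<bar>a\<bar> * d" using a by (simp add: t_def sgn_if)
  have f3: "b*t^2 \<le> \<bar>b\<bar> * d^2"
  proof -
    have "t^2 = d^2" using a by (simp add: t_def power_mult_distrib sgn_if)
    then show ?thesis by (simp add: mult_right_mono)
  qed
  have f4: "\<bar>b\<bar> * d^2 < \<bar>a\<bar> * d"
  proof -
    have "\<bar>b\<bar> * d \<le> \<bar>b\<bar> * (\<bar>a\<bar>/(2*(\<bar>b\<bar>+1)))" using d(3) by (intro mult_left_mono) auto
    also have "\<dots> < \<bar>a\<bar>"
    proof -
      have "0 < \<bar>a\<bar> * \<bar>b\<bar> + \<bar>a\<bar> * 2" using a by (simp add: add_nonneg_pos)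
      then show ?thesis by (simp add: field_simps)
    qed
    finally have "\<bar>b\<bar> * d < \<bar>a\<bar>" .
    then have "(\<bar>b\<bar> * d) * d < \<bar>a\<bar> * d" using d(1) by (rule mult_strict_right_mono)
    then show ?thesis by (simp add: power2_eq_square mult.assoc)
  qed
  from f1 f2 f3 f4 show False by linarith
qed
lemma qf_zero[simp]: "qf M 0 = 0" by (simp add: qf_def)

lemma eig:
  assumes h: "herm C" and v: "norm v = 1" and mx: "\<forall>u. norm u = 1 \<longrightarrow> Re (qf C u) \<le> Re (qf C v)"
  shows "C *v v = of_real (Re (qf C v)) *s v"
proof -
  define lam where "lam = Re (qf C v)"
  have hom: "Re (qf C u) \<le> lam * (norm u)^2" for u
  proof (cases "u = 0")
    case True then show ?thesis by simp
  next
    case False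
    let ?u = "(1/norm u) *\<^sub>R u"
    have "norm ?u = 1" using False by simp
    then have "Re (qf C ?u) \<le> lam" using mx lam_def by auto
    moreover have "qf C ?u = of_real ((1/norm u)^2) * qf C u" by (rule qf_scaleR)
    ultimately have "(1/norm u)^2 * Re (qf C u) \<le> lam" by simp
    then show ?thesis using False by (simp add: field_simps)
  qed
  have cvv: "cin v v = 1" by (simp add: cin_self v)
  have R0: "Re (cin p (C *v v)) = 0" if po: "cin v p = 0" for p
  proof -
    have pv: "cin p v = 0" using po cin_cnj[of p v] by simp
    have key: "0 \<le> (-2 * Re (cin p (C *v v))) * t + (lam * (norm p)^2 - Re (qf C p)) * t^2" for t :: real
    proof -
      have e1: "qf C (v + t *\<^sub>R p) = cin v (C *v v) + of_real t * cin v (C *v p) + of_real t * cin p (C *v v) + of_real t * of_real t * cin p (C *v p)"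
        apply (simp only: qf_cin matrix_vector_right_distrib mv_scaleR cin_add_left cin_add_right cin_scaleR_left cin_scaleR_right)
        apply (simp only: distrib_left add_ac mult.assoc)
        done
      have e3: "cin v (C *v p) = cnj (cin p (C *v v))"
        using herm_adj[OF h, of v p] cin_cnj[of "C *v v" p] by simp
      have e1': "Re (qf C (v + t *\<^sub>R p)) = lam + 2 * t * Re (cin p (C *v v)) + t^2 * Re (qf C p)"
        unfolding e1 e3 by (simp add: lam_def qf_cin power2_eq_square)
      have "of_real ((norm (v + t *\<^sub>R p))^2) = cin (v + t *\<^sub>R p) (v + t *\<^sub>R p)"
        by (simp add: cin_self)
      also have "\<dots> = 1 + of_real t * of_real t * cin p p"
        by (simp add: cin_add_left cin_add_right cin_scaleR_left cin_scaleR_right cvv po pv)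
      also have "\<dots> = of_real (1 + t^2 * (norm p)^2)"
        by (simp add: cin_self power2_eq_square)
      finally have e2: "(norm (v + t *\<^sub>R p))^2 = 1 + t^2 * (norm p)^2"
        by (simp only: of_real_eq_iff)
      show ?thesis using hom[of "v + t *\<^sub>R p"] unfolding e1' e2 by (simp add: algebra_simps)
    qed
    have "-2 * Re (cin p (C *v v)) = 0"
      by (rule quad_zero[of 1]) (use key in auto)
    then show ?thesis by simp
  qed
  have orth: "cin u (C *v v) = 0" if uo: "cin v u = 0" for u
  proof -
    have "Re (cin u (C *v v)) = 0" using R0 uo by blast
    moreover have "cin v (\<i> *s u) = 0" using uo by (simp add: cin_scale_right)
    then have "Re (cin (\<i> *s u) (C *v v)) = 0" by (rule R0)
    then have "Im (cin u (C *v v)) = 0" by (simp add: cin_scale_left)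
    ultimately show ?thesis by (simp add: complex_eq_iff)
  qed
  define c where "c = cin v (C *v v)"
  define w where "w = C *v v - c *s v"
  have "cin v w = 0" by (simp add: w_def cin_diff_right cin_scale_right cvv c_def)
  then have a: "cin w (C *v v) = 0" using orth by blast
  have b: "cin w v = 0" using \<open>cin v w = 0\<close> cin_cnj[of w v] by simp
  have "cin w (C *v v - c *s v) = 0" by (simp add: cin_diff_right cin_scale_right a b)
  then have "cin w w = 0" by (simp only: w_def)
  then have "w = 0" by (rule cin_self_eq0)
  then have "C *v v = c *s v" by (simp add: w_def)
  moreover have "c = of_real lam" using qf_real[OF h, of v] by (simp add: c_def lam_def qf_cin)
  ultimately show ?thesis by (simp add: lam_def)
qed

lemma norm_axis_c: "norm (axis j (1::complex) :: complex^'n::finite) = 1"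
proof -
  have "(norm (axis j (1::complex) :: complex^'n))^2 = 1"
  proof -
    have "(\<lambda>i. (norm ((axis j (1::complex) :: complex^'n)$i))^2) = (\<lambda>i. if i = j then 1 else 0)"
      by (auto simp: axis_def)
    then show ?thesis unfolding normsq by (simp only:) simp
  qed
  then show ?thesis by (simp add: power2_eq_1_iff)
qed

lemma mv_axis: "(M *v axis j (1::complex)) $ i = M$i$j"
  by (simp add: matrix_vector_mult_def axis_def if_distrib cong: if_cong)

lemma peel:
  assumes p: "psd C" and nz: "C \<noteq> 0"
  shows "\<exists>v lam. norm v = 1 \<and> lam > 0 \<and> C *v v = of_real lam *s v"
proof -
  have h: "herm C" and nn: "\<And>u. 0 \<le> Re (qf C u)" using p by (auto simp: psd_iff)
  have ne: "sphere (0::complex^'n) 1 \<noteq> {}"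
  proof -
    have "axis undefined (1::complex) \<in> sphere (0::complex^'n) 1" using norm_axis_c by simp
    then show ?thesis by blast
  qed
  have ct: "continuous_on (sphere 0 1) (\<lambda>u. Re (qf C u))"
    unfolding qf_def by (intro continuous_intros)
  obtain v where vs: "v \<in> sphere 0 1" and vm: "\<forall>u\<in>sphere 0 1. Re (qf C u) \<le> Re (qf C v)"
    using continuous_attains_sup[OF compact_sphere ne ct] by blast
  have v1: "norm v = 1" using vs by simp
  have mx: "\<forall>u. norm u = 1 \<longrightarrow> Re (qf C u) \<le> Re (qf C v)" using vm by simp
  have ev: "C *v v = of_real (Re (qf C v)) *s v" by (rule eig[OF h v1 mx])
  have "Re (qf C v) > 0"
  proof (rule ccontr)
    assume "\<not> Re (qf C v) > 0"
    then have z: "Re (qf C v) = 0" using nn[of v] by simp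
    have "C *v u = 0" if u1: "norm u = 1" for u
    proof -
      have mu: "\<forall>w. norm w = 1 \<longrightarrow> Re (qf C w) \<le> Re (qf C u)" using mx z nn[of u] by auto
      have "Re (qf C u) = 0" using mx u1 z nn[of u] by force
      then show ?thesis using eig[OF h u1 mu] by simp
    qed
    then have "C *v axis j 1 = 0" for j using norm_axis_c by blast
    then have "C = 0" using mv_axis by (metis vec_eq_iff zero_index)
    then show False using nz by simp
  qed
  then show ?thesis using v1 ev by blast
qed

lemma qf_add: "qf (M + N) v = qf M v + qf N v"
  by (simp add: qf_def distrib_left distrib_right sum.distrib)

lemma qf_sum: "qf (\<Sum>k<(m::nat). M k) v = (\<Sum>k<m. qf (M k) v)"
  by (induction m) (simp add: qf_def, simp add: qf_add)

lemma qf_cout: "qf (cout w) v = of_real ((cmod (cin v w))^2)"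
proof -
  have "qf (cout w) v = cin v w * cin w v"
    unfolding qf_def cout_def cin_def sum_product by (simp add: mult_ac)
  also have "\<dots> = cin v w * cnj (cin v w)" using cin_cnj[of w v] by simp
  also have "\<dots> = of_real ((cmod (cin v w))^2)" using complex_norm_square[of "cin v w"] by simp
  finally show ?thesis .
qed


lemma deflate:
  assumes p: "psd C" and v: "norm v = 1" and ev: "C *v v = of_real lam *s v"
  defines "C' \<equiv> (\<chi> i j. C$i$j - of_real lam * (v$i * cnj (v$j)))"
  shows "psd C'" "C' *v v = 0" "\<And>u. C' *v u = C *v (u - cin v u *s v)" "\<And>u. cin v (C' *v u) = 0"
proof -
  have h: "herm C" and nn: "\<And>u. 0 \<le> Re (qf C u)" using p by (auto simp: psd_iff)
  have cvv: "cin v v = 1" by (simp add: cin_self v)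
  have mv: "C' *v u = C *v u - (of_real lam * cin v u) *s v" for u
  proof -
    have "(C' *v u)$i = (C *v u - (of_real lam * cin v u) *s v)$i" for i
    proof -
      have "(C' *v u)$i = (\<Sum>j\<in>UNIV. C$i$j * u$j - of_real lam * v$i * (cnj (v$j) * u$j))"
        by (simp add: C'_def matrix_vector_mult_def left_diff_distrib mult.assoc)
      also have "\<dots> = (\<Sum>j\<in>UNIV. C$i$j * u$j) - of_real lam * v$i * (\<Sum>j\<in>UNIV. cnj (v$j) * u$j)"
        by (simp add: sum_subtractf sum_distrib_left)
      also have "\<dots> = (C *v u - (of_real lam * cin v u) *s v)$i"
        by (simp add: matrix_vector_mult_def cin_def)
      finally show ?thesis .
    qed
    then show ?thesis by (simp add: vec_eq_iff)
  qed
  show sub: "C' *v u = C *v (u - cin v u *s v)" for u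
    unfolding mv mv_diff mv_scale ev by (simp add: vec_eq_iff mult_ac)
  show C'v: "C' *v v = 0" unfolding mv ev cvv by simp
  have hC': "herm C'"
    unfolding herm_def
  proof (intro allI)
    fix i j
    have c: "C$j$i = cnj (C$i$j)" using h unfolding herm_def by blast
    show "C'$j$i = cnj (C'$i$j)" unfolding C'_def vec_lambda_beta c by (simp add: mult.commute)
  qed
  show "cin v (C' *v u) = 0" for u
    using herm_adj[OF hC', of v u] C'v by simp
  show "psd C'"
    unfolding psd_iff
  proof (intro conjI allI hC')
    fix u
    define a where "a = cin v u"
    define u' where "u' = u - a *s v"
    have u'v: "cin v u' = 0" by (simp add: u'_def cin_diff_right cin_scale_right cvv a_def)
    have u'v2: "cin u' v = 0" using u'v cin_cnj[of u' v] by simp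
    have vCu': "cin v (C *v u') = 0"
      using herm_adj[OF h, of v u'] by (simp add: ev cin_scale_left u'v)
    have ueq: "u = u' + a *s v" by (simp add: u'_def)
    have "qf C u = cin (u' + a *s v) (C *v u' + a *s (of_real lam *s v))"
      unfolding qf_cin by (subst (1 2) ueq) (simp add: matrix_vector_right_distrib mv_scale ev)
    also have "\<dots> = qf C u' + cnj a * a * of_real lam"
      by (simp add: qf_cin cin_add_left cin_add_right cin_scale_left cin_scale_right u'v u'v2 vCu' cvv)
    finally have qu: "qf C u = qf C u' + cnj a * a * of_real lam" .
    have "qf C' u = qf C u - of_real lam * a * cin u v"
      by (simp add: qf_cin mv cin_diff_right cin_scale_right a_def)
    also have "cin u v = cnj a" using cin_cnj[of u v] by (simp add: a_def)
    finally have "qf C' u = qf C u'" using qu by simp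
    then show "0 \<le> Re (qf C' u)" using nn[of u'] by simp
  qed
qed

lemma cout_scaleR: "cout (sqrt lam *\<^sub>R v) = (\<chi> i j. of_real lam * (v$i * cnj (v$j)))" if "lam \<ge> 0"
proof -
  have e: "complex_of_real (sqrt lam) * complex_of_real (sqrt lam) = complex_of_real lam"
    using that by (simp flip: of_real_mult)
  have "(sqrt lam *\<^sub>R v)$i * cnj ((sqrt lam *\<^sub>R v)$j) = of_real lam * (v$i * cnj (v$j))" for i j
  proof -
    have "(sqrt lam *\<^sub>R v)$i * cnj ((sqrt lam *\<^sub>R v)$j)
        = (complex_of_real (sqrt lam) * complex_of_real (sqrt lam)) * (v$i * cnj (v$j))"
      unfolding vector_scaleR_component unfolding scaleR_conv_of_real complex_cnj_mult complex_cnj_complex_of_real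
      by (simp only: mult_ac)
    then show ?thesis by (simp only: e)
  qed
  then show ?thesis unfolding cout_def by (simp add: vec_eq_iff)
qed

lemma psd_decomp:
  fixes C :: "complex^'n::finite^'n"
  shows "psd C \<Longrightarrow> \<exists>(m::nat) w. C = (\<Sum>k<m. cout (w k)) \<and> (\<forall>k<m. \<forall>l<m. k \<noteq> l \<longrightarrow> cin (w k) (w l) = 0)"
proof (induction "dim (range (\<lambda>u. C *v u))" arbitrary: C rule: less_induct)
  case less
  show ?case
  proof (cases "C = 0")
    case True
    then show ?thesis by (intro exI[where x="0::nat"] exI[where x="\<lambda>_. 0"]) simp
  next
    case False
    obtain v lam where v: "norm v = 1" "lam > 0" "C *v v = of_real lam *s v"
      using peel[OF less.prems False] by blast
    define C' where "C' = (\<chi> i j. C$i$j - of_real lam * (v$i * cnj (v$j)))"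
    have psdC': "psd C'" and C'v: "C' *v v = 0" and sub: "\<And>u. C' *v u = C *v (u - cin v u *s v)"
      and perp: "\<And>u. cin v (C' *v u) = 0"
      using deflate[OF less.prems v(1) v(3)] unfolding C'_def by auto
    have cvv: "cin v v = 1" by (simp add: cin_self v)
    have "dim (range (\<lambda>u. C' *v u)) < dim (range (\<lambda>u. C *v u))"
    proof (rule dim_psubset)
      have s1: "range (\<lambda>u. C' *v u) \<subseteq> range (\<lambda>u. C *v u)"
      proof
        fix x assume "x \<in> range (\<lambda>u. C' *v u)"
        then obtain u where "x = C' *v u" by blast
        then have "x = C *v (u - cin v u *s v)" by (simp only: sub)
        then show "x \<in> range (\<lambda>u. C *v u)" by (rule range_eqI)
      qed
      have s2: "span (range (\<lambda>u. C' *v u)) \<subseteq> {x. cin v x = 0}"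
      proof (rule span_minimal)
        show "range (\<lambda>u. C' *v u) \<subseteq> {x. cin v x = 0}" using perp by blast
        show "subspace {x. cin v x = 0}"
          unfolding subspace_def by (simp add: cin_add_right cin_scaleR_right)
      qed
      have "C *v ((1/lam) *\<^sub>R v) = v"
        using v(2) unfolding mv_scaleR v(3) vec_eq_iff vector_scaleR_component
        by (simp add: scaleR_conv_of_real)
      then have "v \<in> range (\<lambda>u. C *v u)" by (metis rangeI)
      then have s3: "v \<in> span (range (\<lambda>u. C *v u))" by (rule span_base)
      have s4: "v \<notin> span (range (\<lambda>u. C' *v u))" using s2 cvv by auto
      show "span (range (\<lambda>u. C' *v u)) \<subset> span (range (\<lambda>u. C *v u))"
        using span_mono[OF s1] s3 s4 by blast
    qed
    from less.hyps[OF this psdC'] obtain m :: nat and w where IH: "C' = (\<Sum>k<m. cout (w k))" "\<forall>k<m. \<forall>l<m. k \<noteq> l \<longrightarrow> cin (w k) (w l) = 0"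
      by blast
    have wv: "cin v (w k) = 0" if km: "k < m" for k
    proof -
      have "qf C' v = 0" using C'v by (simp add: qf_cin)
      then have "(\<Sum>k<m. of_real ((cmod (cin v (w k)))^2)) = (0::complex)"
        unfolding IH(1) qf_sum qf_cout .
      then have "of_real (\<Sum>k<m. (cmod (cin v (w k)))^2) = (of_real 0 :: complex)"
        by (simp only: of_real_sum of_real_0)
      then have "(\<Sum>k<m. (cmod (cin v (w k)))^2) = 0"
        by (simp only: of_real_eq_iff)
      then have "\<forall>k\<in>{..<m}. (cmod (cin v (w k)))^2 = 0"
        by (subst sum_nonneg_eq_0_iff[symmetric]) auto
      then show ?thesis using km by simp
    qed
    define w' where "w' = w(m := sqrt lam *\<^sub>R v)"
    show ?thesis
    proof (intro exI[of _ "Suc m"] exI[of _ w'] conjI)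
      have "(\<Sum>k<Suc m. cout (w' k)) = (\<Sum>k<m. cout (w k)) + cout (sqrt lam *\<^sub>R v)"
      proof -
        have "(\<Sum>k<m. cout (w' k)) = (\<Sum>k<m. cout (w k))"
          by (rule sum.cong) (auto simp: w'_def)
        then show ?thesis by (simp add: w'_def)
      qed
      also have "\<dots> = C' + (\<chi> i j. of_real lam * (v$i * cnj (v$j)))"
        using v(2) by (simp add: IH(1) cout_scaleR)
      also have "\<dots> = C" by (simp add: C'_def vec_eq_iff)
      finally show "C = (\<Sum>k<Suc m. cout (w' k))" ..
      show "\<forall>k<Suc m. \<forall>l<Suc m. k \<noteq> l \<longrightarrow> cin (w' k) (w' l) = 0"
      proof (intro allI impI)
        fix k l assume kl: "k < Suc m" "l < Suc m" "k \<noteq> l"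
        show "cin (w' k) (w' l) = 0"
        proof (cases "k = m")
          case True
          then have "l < m" using kl by auto
          then show ?thesis using True wv by (simp add: w'_def cin_scaleR_left)
        next
          case False
          then have k: "k < m" using kl by auto
          show ?thesis
          proof (cases "l = m")
            case True
            have "cin (w k) v = 0" using wv[OF k] cin_cnj[of "w k" v] by simp
            then show ?thesis using True False by (simp add: w'_def cin_scaleR_right)
          next
            case False
            then show ?thesis using \<open>k \<noteq> m\<close> k kl IH(2) by (simp add: w'_def)
          qed
        qed
      qed
    qed
  qed
qed


lemma sum4_swap:
  "(\<Sum>i\<in>I. \<Sum>j\<in>J. \<Sum>k\<in>K. \<Sum>l\<in>L. F i j k l) = (\<Sum>k\<in>K. \<Sum>l\<in>L. \<Sum>i\<in>I. \<Sum>j\<in>J. F i j k l)"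
proof -
  have "(\<Sum>i\<in>I. \<Sum>j\<in>J. \<Sum>k\<in>K. \<Sum>l\<in>L. F i j k l) = (\<Sum>i\<in>I. \<Sum>k\<in>K. \<Sum>j\<in>J. \<Sum>l\<in>L. F i j k l)"
    by (rule sum.cong[OF refl]) (rule sum.swap)
  also have "\<dots> = (\<Sum>i\<in>I. \<Sum>k\<in>K. \<Sum>l\<in>L. \<Sum>j\<in>J. F i j k l)"
    by (rule sum.cong[OF refl], rule sum.cong[OF refl], rule sum.swap)
  also have "\<dots> = (\<Sum>k\<in>K. \<Sum>i\<in>I. \<Sum>l\<in>L. \<Sum>j\<in>J. F i j k l)" by (rule sum.swap)
  also have "\<dots> = (\<Sum>k\<in>K. \<Sum>l\<in>L. \<Sum>i\<in>I. \<Sum>j\<in>J. F i j k l)"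
    by (rule sum.cong[OF refl], rule sum.swap)
  finally show ?thesis .
qed

lemma entry_sq_decomp:
  assumes "C = (\<Sum>k<(m::nat). cout (w k))"
  shows "(\<Sum>i\<in>UNIV. \<Sum>j\<in>UNIV. \<beta> i j * (C$i$j * cnj (C$i$j)))
       = (\<Sum>k<m. \<Sum>l<m. \<Sum>i\<in>UNIV. \<Sum>j\<in>UNIV. \<beta> i j * (w k$i * cnj (w l$i) * (cnj (w k$j) * w l$j)))"
proof -
  have Cij: "C$i$j = (\<Sum>k<m. w k$i * cnj (w k$j))" for i j by (simp add: assms sum_component cout_def)
  have e: "C$i$j * cnj (C$i$j) = (\<Sum>k<m. \<Sum>l<m. w k$i * cnj (w l$i) * (cnj (w k$j) * w l$j))" for i j
    unfolding Cij cnj_sum sum_product by (intro sum.cong refl) (simp add: mult_ac)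
  show ?thesis unfolding e sum_distrib_left by (rule sum4_swap)
qed

lemma one_term: "(\<Sum>i\<in>UNIV. \<Sum>j\<in>UNIV. 1 * (x$i * cnj (y$i) * (cnj (x$j) * y$j))) = cin y x * cin x y"
  unfolding cin_def sum_product by (intro sum.cong refl) (simp add: mult_ac)

lemma B_term: "(\<Sum>i\<in>UNIV. \<Sum>j\<in>UNIV. B$i$j * (x$i * cnj (y$i) * (cnj (x$j) * y$j))) = qf B (\<chi> i. cnj (x$i) * y$i)"
  unfolding qf_def by (intro sum.cong refl) (simp add: mult_ac)

lemma B_entry: "hadamard A (conj_mat A) $i$j = of_real ((cmod (A$i$j))^2)"
  using complex_norm_square[of "A$i$j"] by (simp add: hadamard_def conj_mat_def)

lemma psd_B:
  assumes pA: "psd A"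
  shows "psd (hadamard A (conj_mat A))"
  unfolding psd_iff
proof (intro conjI allI)
  have h: "herm A" using pA by (simp add: psd_iff)
  show "herm (hadamard A (conj_mat A))"
    unfolding herm_def B_entry
  proof (intro allI)
    fix i j
    have "A$j$i = cnj (A$i$j)" using h unfolding herm_def by blast
    then show "complex_of_real ((cmod (A$j$i))\<^sup>2) = cnj (complex_of_real ((cmod (A$i$j))\<^sup>2))" by simp
  qed
  fix u :: "complex^'a"
  obtain m :: nat and a where dA: "A = (\<Sum>p<m. cout (a p))"
    using psd_decomp[OF pA] by blast
  have cA: "cnj (A$i$j) = (\<Sum>p<m. cnj (a p$i) * a p$j)" for i j
    by (simp add: dA sum_component cout_def cnj_sum)
  have "qf (hadamard A (conj_mat A)) u = (\<Sum>i\<in>UNIV. \<Sum>j\<in>UNIV. cnj (u$i) * (A$i$j * cnj (A$i$j)) * u$j)"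
    unfolding qf_def by (simp add: hadamard_def conj_mat_def)
  also have "\<dots> = (\<Sum>i\<in>UNIV. \<Sum>j\<in>UNIV. \<Sum>p<m. cnj (a p$i * u$i) * A$i$j * (a p$j * u$j))"
    unfolding cA sum_distrib_left sum_distrib_right by (intro sum.cong refl) (simp add: mult_ac)
  also have "\<dots> = (\<Sum>p<m. \<Sum>i\<in>UNIV. \<Sum>j\<in>UNIV. cnj (a p$i * u$i) * A$i$j * (a p$j * u$j))"
  proof -
    have "(\<Sum>i\<in>UNIV. \<Sum>j\<in>UNIV. \<Sum>p<m. cnj (a p$i * u$i) * A$i$j * (a p$j * u$j))
        = (\<Sum>i\<in>UNIV. \<Sum>p<m. \<Sum>j\<in>UNIV. cnj (a p$i * u$i) * A$i$j * (a p$j * u$j))"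
      by (rule sum.cong[OF refl]) (rule sum.swap)
    also have "\<dots> = (\<Sum>p<m. \<Sum>i\<in>UNIV. \<Sum>j\<in>UNIV. cnj (a p$i * u$i) * A$i$j * (a p$j * u$j))"
      by (rule sum.swap)
    finally show ?thesis .
  qed
  also have "\<dots> = (\<Sum>p<m. qf A (\<chi> i. a p$i * u$i))"
    unfolding qf_def by simp
  finally have e: "qf (hadamard A (conj_mat A)) u = (\<Sum>p<m. qf A (\<chi> i. a p$i * u$i))" .
  have "0 \<le> (\<Sum>p<m. Re (qf A (\<chi> i. a p$i * u$i)))"
    using pA by (intro sum_nonneg) (simp add: psd_iff)
  then show "0 \<le> Re (qf (hadamard A (conj_mat A)) u)" unfolding e Re_sum .
qed

definition gfun :: "complex^'n::finite^'n \<Rightarrow> real^'n \<Rightarrow> real" where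
  "gfun A x = (\<Sum>i\<in>UNIV. \<Sum>j\<in>UNIV. (cmod (A$i$j))^2 * (x$i)^2 * (x$j)^2)"

lemma zcz: "z * cnj z = complex_of_real ((cmod z)^2)"
  using complex_norm_square[of z] by simp

lemma frob_sq: "(frob M)^2 = (\<Sum>i\<in>UNIV. \<Sum>j\<in>UNIV. (cmod (M$i$j))^2)"
  unfolding frob_def by (simp add: sum_nonneg)

lemma frob_nonneg: "0 \<le> frob M" unfolding frob_def by (intro real_sqrt_ge_zero sum_nonneg zero_le_power2)

lemma frob_had_outer: "(frob (hadamard A (outer x)))^2 = gfun A x"
  unfolding frob_sq gfun_def
  by (intro sum.cong refl) (simp add: hadamard_def outer_def norm_mult power_mult_distrib mult.assoc)

lemma psd_outer: "psd (outer x)"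
  unfolding psd_iff
proof (intro conjI allI)
  show "herm (outer x)" unfolding herm_def outer_def by (simp add: mult.commute)
  fix v :: "complex^'a"
  define s where "s = (\<Sum>j\<in>UNIV. complex_of_real (x$j) * v$j)"
  have "qf (outer x) v = cnj s * s"
    unfolding qf_def outer_def s_def cnj_sum sum_product by (intro sum.cong refl) (simp add: mult_ac)
  also have "\<dots> = complex_of_real ((cmod s)^2)" using zcz[of s] by (simp add: mult.commute)
  finally show "0 \<le> Re (qf (outer x) v)" by simp
qed

lemma normsq_real: "(norm (x::real^'n))^2 = (\<Sum>i\<in>UNIV. (x$i)^2)"
  unfolding normsq by simp

lemma frob_outer: "frob (outer x) = (norm x)^2"
proof -
  have "(frob (outer x))^2 = (\<Sum>i\<in>UNIV. \<Sum>j\<in>UNIV. (x$i)^2 * (x$j)^2)"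
    unfolding frob_sq outer_def by (simp add: power_mult_distrib norm_mult)
  also have "\<dots> = ((norm x)^2)^2"
    unfolding normsq_real power2_eq_square[of "\<Sum>i\<in>UNIV. (x$i)^2"] sum_product ..
  finally have "(frob (outer x))^2 = ((norm x)^2)^2" .
  then show ?thesis by (rule power2_eq_imp_eq) (simp_all add: frob_nonneg)
qed

lemma gfun_scale: "gfun A (r *\<^sub>R x) = r^4 * gfun A x"
  unfolding gfun_def sum_distrib_left
  by (intro sum.cong refl) (simp add: power_mult_distrib power4_eq_xxxx power2_eq_square mult_ac)

lemma gfun_zero: "gfun A 0 = 0" by (simp add: gfun_def)

lemma gfun_lower:
  assumes mu: "\<forall>y. norm y = 1 \<longrightarrow> \<mu> \<le> gfun A y"
  shows "\<mu> * (norm x)^4 \<le> gfun A x"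
proof (cases "x = 0")
  case True then show ?thesis by (simp add: gfun_zero)
next
  case False
  then have n: "norm x > 0" by simp
  have "\<mu> \<le> gfun A ((1/norm x) *\<^sub>R x)" using mu n by simp
  also have "\<dots> = gfun A x / (norm x)^4" by (simp add: gfun_scale power_one_over)
  finally show ?thesis using n by (simp add: field_simps)
qed

lemma key:
  assumes pA: "psd A" and pC: "psd C" and mu: "\<forall>y. norm y = 1 \<longrightarrow> \<mu> \<le> gfun A y"
  shows "\<mu> * (frob C)^2 \<le> (frob (hadamard A C))^2"
proof -
  obtain m :: nat and w where dC: "C = (\<Sum>k<m. cout (w k))"
    and orth: "\<forall>k<m. \<forall>l<m. k \<noteq> l \<longrightarrow> cin (w k) (w l) = 0"
    using psd_decomp[OF pC] by blast
  let ?B = "hadamard A (conj_mat A)"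
  have pB: "psd ?B" by (rule psd_B[OF pA])
  define Q where "Q k l = Re (qf ?B (\<chi> i. cnj (w k$i) * w l$i))" for k l
  have Qnn: "0 \<le> Q k l" for k l using pB by (simp add: Q_def psd_iff)
  have LHS: "(frob (hadamard A C))^2 = (\<Sum>k<m. \<Sum>l<m. Q k l)"
  proof -
    have "(frob (hadamard A C))^2 = Re (\<Sum>i\<in>UNIV. \<Sum>j\<in>UNIV. ?B$i$j * (C$i$j * cnj (C$i$j)))"
      unfolding frob_sq Re_sum B_entry zcz
      by (intro sum.cong refl) (simp add: hadamard_def norm_mult power_mult_distrib)
    also have "\<dots> = Re (\<Sum>k<m. \<Sum>l<m. qf ?B (\<chi> i. cnj (w k$i) * w l$i))"
      unfolding entry_sq_decomp[OF dC] B_term ..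
    finally show ?thesis by (simp add: Q_def Re_sum)
  qed
  have RHS: "(frob C)^2 = (\<Sum>k<m. (norm (w k))^4)"
  proof -
    have "(frob C)^2 = Re (\<Sum>i\<in>UNIV. \<Sum>j\<in>UNIV. 1 * (C$i$j * cnj (C$i$j)))"
      unfolding frob_sq Re_sum zcz by simp
    also have "\<dots> = Re (\<Sum>k<m. \<Sum>l<m. cin (w l) (w k) * cin (w k) (w l))"
      unfolding entry_sq_decomp[OF dC] one_term ..
    also have "\<dots> = (\<Sum>k<m. Re (cin (w k) (w k) * cin (w k) (w k)))"
      unfolding Re_sum
    proof (rule sum.cong[OF refl])
      fix k assume k: "k \<in> {..<m}"
      have "(\<Sum>l<m. Re (cin (w l) (w k) * cin (w k) (w l)))
          = Re (cin (w k) (w k) * cin (w k) (w k)) + (\<Sum>l\<in>{..<m}-{k}. Re (cin (w l) (w k) * cin (w k) (w l)))"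
        using k by (simp add: sum.remove)
      also have "(\<Sum>l\<in>{..<m}-{k}. Re (cin (w l) (w k) * cin (w k) (w l))) = 0"
        using k orth by (intro sum.neutral) auto
      finally show "(\<Sum>l<m. Re (cin (w l) (w k) * cin (w k) (w l))) = Re (cin (w k) (w k) * cin (w k) (w k))"
        by simp
    qed
    also have "\<dots> = (\<Sum>k<m. (norm (w k))^4)"
      by (intro sum.cong refl) (simp add: cin_self power4_eq_xxxx power2_eq_square flip: of_real_mult)
    finally show ?thesis .
  qed
  have diag: "\<mu> * (norm (w k))^4 \<le> Q k k" for k
  proof -
    let ?x = "\<chi> i. cmod (w k$i)"
    have "Q k k = gfun A ?x"
    proof -
      have "cnj (w k$i) * w k$i = complex_of_real ((cmod (w k$i))^2)" for i
        using zcz[of "w k$i"] by (simp add: mult.commute)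
      then have "Q k k = Re (\<Sum>i\<in>UNIV. \<Sum>j\<in>UNIV. complex_of_real ((cmod (w k$i))^2) * complex_of_real ((cmod (A$i$j))^2) * complex_of_real ((cmod (w k$j))^2))"
        unfolding Q_def qf_def B_entry by simp
      also have "\<dots> = gfun A ?x"
        unfolding gfun_def Re_sum by (intro sum.cong refl) (simp flip: of_real_mult)
      finally show ?thesis .
    qed
    moreover have "norm ?x = norm (w k)"
    proof -
      have "(norm ?x)^2 = (norm (w k))^2" unfolding normsq by simp
      then show ?thesis by (simp add: power2_eq_iff_nonneg)
    qed
    ultimately show ?thesis using gfun_lower[OF mu, of ?x] by simp
  qed
  have "\<mu> * (frob C)^2 = (\<Sum>k<m. \<mu> * (norm (w k))^4)" unfolding RHS by (simp add: sum_distrib_left)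
  also have "\<dots> \<le> (\<Sum>k<m. Q k k)" by (intro sum_mono diag)
  also have "\<dots> \<le> (\<Sum>k<m. \<Sum>l<m. Q k l)"
    by (intro sum_mono member_le_sum) (auto simp: Qnn)
  finally show ?thesis unfolding LHS .
qed



lemma part1:
  fixes A :: "complex^'n::finite^'n"
  assumes pA: "psd A"
  shows "\<exists>x::real^'n. (\<forall>i. 0 \<le> x$i) \<and> norm x = 1 \<and> frob (hadamard A (outer x)) = I2 A"
proof -
  have ne: "sphere (0::real^'n) 1 \<noteq> {}"
  proof -
    have "axis undefined (1::real) \<in> sphere (0::real^'n) 1" by simp
    then show ?thesis by blast
  qed
  have ct: "continuous_on (sphere 0 1) (gfun A)"
    unfolding gfun_def by (intro continuous_intros)
  obtain x0 where x0s: "x0 \<in> sphere 0 1" and x0m: "\<forall>y\<in>sphere 0 1. gfun A x0 \<le> gfun A y"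
    using continuous_attains_inf[OF compact_sphere ne ct] by blast
  define x1 where "x1 = (\<chi> i. \<bar>x0$i\<bar>)"
  have nx1: "norm x1 = 1"
  proof -
    have "(norm x1)^2 = (norm x0)^2" unfolding normsq_real x1_def by simp
    then show ?thesis using x0s by (simp add: power2_eq_iff_nonneg)
  qed
  have gx1: "gfun A x1 = gfun A x0" unfolding gfun_def x1_def by simp
  have mu: "\<forall>y. norm y = 1 \<longrightarrow> gfun A x1 \<le> gfun A y" using x0m gx1 by simp
  have fx1: "(frob (hadamard A (outer x1)))^2 = gfun A x1" by (rule frob_had_outer)
  have "I2 A = frob (hadamard A (outer x1))"
    unfolding I2_def
  proof (rule cInf_eq_minimum)
    show "frob (hadamard A (outer x1)) \<in> {frob (hadamard A C) |C. psd C \<and> frob C = 1}"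
      using psd_outer[of x1] frob_outer[of x1] nx1 by auto
    fix s assume "s \<in> {frob (hadamard A C) |C. psd C \<and> frob C = 1}"
    then obtain C where C: "psd C" "frob C = 1" "s = frob (hadamard A C)" by blast
    have "gfun A x1 * (frob C)^2 \<le> (frob (hadamard A C))^2" by (rule key[OF pA C(1) mu])
    then have "(frob (hadamard A (outer x1)))^2 \<le> (frob (hadamard A C))^2" using C(2) fx1 by simp
    then show "frob (hadamard A (outer x1)) \<le> s" unfolding C(3)
      by (rule power2_le_imp_le) (rule frob_nonneg)
  qed
  moreover have "\<forall>i. 0 \<le> x1$i" by (simp add: x1_def)
  ultimately show ?thesis using nx1 by metis
qed

lemma I2_min:
  fixes A :: "complex^'n::finite^'n"
  assumes "frob (hadamard A (outer x)) = I2 A" "norm y = 1"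
  shows "gfun A x \<le> gfun A y"
proof -
  have "I2 A \<le> frob (hadamard A (outer y))"
    unfolding I2_def
  proof (rule cInf_lower)
    show "frob (hadamard A (outer y)) \<in> {frob (hadamard A C) |C. psd C \<and> frob C = 1}"
      using psd_outer[of y] frob_outer[of y] assms(2) by auto
    show "bdd_below {frob (hadamard A C) |C. psd C \<and> frob C = 1}"
      by (rule bdd_belowI[of _ 0]) (auto simp: frob_nonneg)
  qed
  then have "frob (hadamard A (outer x)) \<le> frob (hadamard A (outer y))" using assms(1) by simp
  then have "(frob (hadamard A (outer x)))^2 \<le> (frob (hadamard A (outer y)))^2"
    by (rule power_mono) (rule frob_nonneg)
  then show ?thesis by (simp add: frob_had_outer)
qed

lemma vec_lambda_beta_2: "(\<chi> i j. f i j) $ k $ l = f k l" by simp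

lemma sum_delta_diff:
  fixes f :: "'n::finite \<Rightarrow> real"
  shows "(\<Sum>k\<in>UNIV. ((if k = i then 1 else 0) - (if k = j then 1 else 0)) * f k) = f i - f j"
proof -
  have a: "(\<Sum>k\<in>UNIV. (if k = m then 1 else 0) * f k) = f m" for m
  proof -
    have "(\<Sum>k\<in>UNIV. (if k = m then 1 else 0) * f k) = (\<Sum>k\<in>UNIV. if k = m then f k else 0)"
      by (rule sum.cong) auto
    then show ?thesis by simp
  qed
  show ?thesis unfolding left_diff_distrib sum_subtractf a ..
qed

lemma p2_equal:
  fixes A :: "complex^'n::finite^'n" and x :: "real^'n"
  assumes hA: "herm A" and nx: "norm x = 1" and mn: "\<forall>y. norm y = 1 \<longrightarrow> gfun A x \<le> gfun A y"
    and xi: "x$i \<noteq> 0" and xj: "x$j \<noteq> 0"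
  shows "(\<Sum>l\<in>UNIV. (cmod (A$i$l))^2 * (x$l)^2) = (\<Sum>l\<in>UNIV. (cmod (A$j$l))^2 * (x$l)^2)"
proof (cases "i = j")
  case True then show ?thesis by simp
next
  case False
  define b where "b k l = (cmod (A$k$l))^2" for k l
  define z where "z k = (x$k)^2" for k
  define r where "r k = (\<Sum>l\<in>UNIV. b k l * z l)" for k
  define d where "d k = (if k = i then 1 else 0) - (if k = j then 1 else (0::real))" for k
  define K where "K = (\<Sum>k\<in>UNIV. \<Sum>l\<in>UNIV. b k l * d k * d l)"
  have bsym: "b k l = b l k" for k l
  proof -
    have "A$l$k = cnj (A$k$l)" using hA unfolding herm_def by blast
    then show ?thesis by (simp add: b_def)
  qed
  have zpos: "z i > 0" "z j > 0" using xi xj by (auto simp: z_def)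
  have znn: "z k \<ge> 0" for k by (simp add: z_def)
  have Sz: "(\<Sum>k\<in>UNIV. z k) = 1" using nx unfolding z_def normsq_real[symmetric] by simp
  have Sd: "(\<Sum>k\<in>UNIV. d k * f k) = f i - f j" for f unfolding d_def by (rule sum_delta_diff)
  have Sd0: "(\<Sum>k\<in>UNIV. d k) = 0" using Sd[of "\<lambda>_. 1"] by simp
  have gx: "gfun A x = (\<Sum>k\<in>UNIV. \<Sum>l\<in>UNIV. b k l * z k * z l)"
    unfolding gfun_def b_def z_def ..
  have lin1: "(\<Sum>k\<in>UNIV. \<Sum>l\<in>UNIV. b k l * (d k * z l)) = r i - r j"
  proof -
    have "(\<Sum>k\<in>UNIV. \<Sum>l\<in>UNIV. b k l * (d k * z l)) = (\<Sum>k\<in>UNIV. d k * r k)"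
      unfolding r_def sum_distrib_left by (intro sum.cong refl) (simp add: mult_ac)
    then show ?thesis using Sd[of r] by simp
  qed
  have lin2: "(\<Sum>k\<in>UNIV. \<Sum>l\<in>UNIV. b k l * (z k * d l)) = r i - r j"
  proof -
    have "(\<Sum>k\<in>UNIV. \<Sum>l\<in>UNIV. b k l * (z k * d l)) = (\<Sum>l\<in>UNIV. \<Sum>k\<in>UNIV. b k l * (z k * d l))"
      by (rule sum.swap)
    also have "\<dots> = (\<Sum>l\<in>UNIV. d l * r l)"
      unfolding r_def sum_distrib_left by (intro sum.cong refl) (simp add: mult_ac bsym)
    finally show ?thesis using Sd[of r] by simp
  qed
  define e where "e = min (z i) (z j)"
  have e: "e > 0" using zpos by (simp add: e_def)
  have quad: "0 \<le> (2 * (r i - r j)) * t + K * t^2" if t: "\<bar>t\<bar> < e" for t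
  proof -
    define zt where "zt k = z k + t * d k" for k
    have ztnn: "zt k \<ge> 0" for k
    proof -
      have "\<bar>t\<bar> < z i" "\<bar>t\<bar> < z j" using t by (auto simp: e_def)
      then show ?thesis using znn[of k] \<open>i \<noteq> j\<close> by (auto simp: zt_def d_def)
    qed
    define y where "y = (\<chi> k. sqrt (zt k))"
    have y2: "(y$k)^2 = zt k" for k using ztnn by (simp add: y_def)
    have "(norm y)^2 = 1"
      unfolding normsq_real y2 zt_def by (simp add: sum.distrib Sz sum_distrib_left[symmetric] Sd0)
    then have ny: "norm y = 1" using norm_ge_zero[of y] by (auto simp: power2_eq_1_iff)
    have "gfun A y = (\<Sum>k\<in>UNIV. \<Sum>l\<in>UNIV. b k l * zt k * zt l)"
      unfolding gfun_def y2 b_def ..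
    also have "\<dots> = (\<Sum>k\<in>UNIV. \<Sum>l\<in>UNIV. b k l * z k * z l + t * (b k l * (d k * z l) + b k l * (z k * d l)) + t^2 * (b k l * d k * d l))"
      unfolding zt_def by (intro sum.cong refl) (simp add: algebra_simps power2_eq_square)
    also have "\<dots> = (\<Sum>k\<in>UNIV. \<Sum>l\<in>UNIV. b k l * z k * z l) + (\<Sum>k\<in>UNIV. \<Sum>l\<in>UNIV. t * (b k l * (d k * z l) + b k l * (z k * d l))) + (\<Sum>k\<in>UNIV. \<Sum>l\<in>UNIV. t^2 * (b k l * d k * d l))"
      by (simp only: sum.distrib)
    also have "(\<Sum>k\<in>UNIV. \<Sum>l\<in>UNIV. t * (b k l * (d k * z l) + b k l * (z k * d l))) = t * (2 * (r i - r j))"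
    proof -
      have "(\<Sum>k\<in>UNIV. \<Sum>l\<in>UNIV. t * (b k l * (d k * z l) + b k l * (z k * d l)))
          = t * ((\<Sum>k\<in>UNIV. \<Sum>l\<in>UNIV. b k l * (d k * z l)) + (\<Sum>k\<in>UNIV. \<Sum>l\<in>UNIV. b k l * (z k * d l)))"
        by (simp only: sum_distrib_left distrib_left sum.distrib)
      then show ?thesis unfolding lin1 lin2 by simp
    qed
    also have "(\<Sum>k\<in>UNIV. \<Sum>l\<in>UNIV. t^2 * (b k l * d k * d l)) = t^2 * K"
      unfolding K_def sum_distrib_left ..
    also have "(\<Sum>k\<in>UNIV. \<Sum>l\<in>UNIV. b k l * z k * z l) = gfun A x" by (rule gx[symmetric])
    finally have "gfun A y = gfun A x + t * (2 * (r i - r j)) + t^2 * K" .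
    moreover have "gfun A x \<le> gfun A y" using mn ny by blast
    ultimately show ?thesis by (simp add: mult.commute)
  qed
  have "2 * (r i - r j) = 0" by (rule quad_zero[OF e]) (use quad in blast)
  then show ?thesis by (simp add: r_def b_def z_def)
qed

lemma restr_sum:
  fixes F :: "'n::finite \<Rightarrow> 'n \<Rightarrow> complex"
  assumes w: "w = (\<chi> i. if i \<in> J then v$i else 0)"
  shows "(\<Sum>i\<in>UNIV. \<Sum>j\<in>UNIV. cnj (w$i) * F i j * w$j) = (\<Sum>i\<in>J. \<Sum>j\<in>J. cnj (v$i) * F i j * v$j)"
proof -
  have "(\<Sum>i\<in>UNIV. \<Sum>j\<in>UNIV. cnj (w$i) * F i j * w$j) = (\<Sum>i\<in>J. \<Sum>j\<in>UNIV. cnj (w$i) * F i j * w$j)"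
    by (rule sum.mono_neutral_right) (auto simp: w)
  also have "\<dots> = (\<Sum>i\<in>J. \<Sum>j\<in>J. cnj (w$i) * F i j * w$j)"
    by (rule sum.cong[OF refl], rule sum.mono_neutral_right) (auto simp: w)
  also have "\<dots> = (\<Sum>i\<in>J. \<Sum>j\<in>J. cnj (v$i) * F i j * v$j)"
    by (intro sum.cong refl) (auto simp: w)
  finally show ?thesis .
qed

lemma part2:
  fixes A :: "complex^'n::finite^'n" and x :: "real^'n"
  assumes pA: "psd A" and nx: "norm x = 1" and mn: "\<forall>y. norm y = 1 \<longrightarrow> gfun A x \<le> gfun A y"
  shows "hadamard (hadamard A (conj_mat A)) (outer x) *v (\<chi> i. complex_of_real (x$i))
       = complex_of_real (Isub {i. x$i \<noteq> 0} (hadamard A (conj_mat A))) *s (\<chi> i. complex_of_real (x$i))"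
proof -
  let ?B = "hadamard A (conj_mat A)"
  have hA: "herm A" using pA by (simp add: psd_iff)
  have pB: "psd ?B" by (rule psd_B[OF pA])
  have hB: "herm ?B" using pB by (simp add: psd_iff)
  define J where "J = {i. x$i \<noteq> 0}"
  define b where "b k l = (cmod (A$k$l))^2" for k l
  define z where "z k = (x$k)^2" for k
  define r where "r k = (\<Sum>l\<in>UNIV. b k l * z l)" for k
  have Bij: "?B$k$l = complex_of_real (b k l)" for k l by (simp add: B_entry b_def)
  have bsym: "b k l = b l k" for k l
  proof -
    have "A$l$k = cnj (A$k$l)" using hA unfolding herm_def by blast
    then show ?thesis by (simp add: b_def)
  qed
  obtain i0 where xi0: "x$i0 \<noteq> 0"
  proof (rule ccontr)
    assume "\<not> thesis"
    then have "\<forall>i. x$i = 0" using that by blast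
    then have "x = 0" by (simp add: vec_eq_iff)
    then show False using nx by simp
  qed
  define c where "c = r i0"
  have rc: "r k = c" if "x$k \<noteq> 0" for k
    using p2_equal[OF hA nx mn that xi0] unfolding c_def r_def b_def z_def .
  have zJ: "z k = 0" if "k \<notin> J" for k using that by (simp add: J_def z_def)
  have Sz: "(\<Sum>k\<in>UNIV. z k) = 1" using nx unfolding z_def normsq_real[symmetric] by simp
  have gzr: "gfun A x = (\<Sum>k\<in>UNIV. z k * r k)"
    unfolding gfun_def r_def b_def z_def sum_distrib_left by (intro sum.cong refl) (simp add: mult_ac)
  have gx: "gfun A x = c"
  proof -
    have "(\<Sum>k\<in>UNIV. z k * r k) = (\<Sum>k\<in>UNIV. z k * c)"
    proof (rule sum.cong[OF refl])
      fix k show "z k * r k = z k * c" using rc[of k] by (cases "x$k = 0") (auto simp: z_def)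
    qed
    then show ?thesis unfolding gzr by (simp add: sum_distrib_right[symmetric] Sz)
  qed
  have c0: "c \<ge> 0" unfolding c_def r_def b_def z_def by (intro sum_nonneg) simp
  define zc where "zc = (\<chi> k. complex_of_real (z k))"
  have Bzc: "?B *v zc = (\<chi> k. complex_of_real (r k))"
    unfolding vec_eq_iff matrix_vector_mult_def Bij zc_def r_def by (simp add: of_real_sum)
  have Isub_eq: "Isub J ?B = c"
    unfolding Isub_def
  proof (rule cSup_eq_maximum)
    show "c \<in> {l. 0 \<le> l \<and> psd_on J (\<chi> i j. ?B$i$j - complex_of_real l)}"
    proof (simp only: mem_Collect_eq, intro conjI c0)
      show "psd_on J (\<chi> i j. ?B$i$j - complex_of_real c)"
        unfolding psd_on_def
      proof (intro conjI ballI allI)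
        fix i j show "(\<chi> i j. ?B$i$j - complex_of_real c)$j$i = cnj ((\<chi> i j. ?B$i$j - complex_of_real c)$i$j)"
          by (simp add: Bij bsym)
      next
        fix v :: "complex^'n"
        define w where "w = (\<chi> i. if i \<in> J then v$i else 0)"
        define S where "S = (\<Sum>i\<in>UNIV. w$i)"
        have wJ: "w$k = 0" if "k \<notin> J" for k using that by (simp add: w_def)
        have e1: "(\<Sum>i\<in>J. \<Sum>j\<in>J. cnj (v$i) * (\<chi> i j. ?B$i$j - complex_of_real c)$i$j * v$j)
                 = qf ?B w - complex_of_real c * (cnj S * S)"
        proof -
          have q: "qf ?B w = (\<Sum>i\<in>J. \<Sum>j\<in>J. cnj (v$i) * ?B$i$j * v$j)"
            unfolding qf_def by (rule restr_sum[OF w_def])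
          have "cnj S * S = (\<Sum>i\<in>UNIV. \<Sum>j\<in>UNIV. cnj (w$i) * 1 * w$j)"
            unfolding S_def cnj_sum sum_product by simp
          also have "\<dots> = (\<Sum>i\<in>J. \<Sum>j\<in>J. cnj (v$i) * 1 * v$j)" by (rule restr_sum[OF w_def])
          finally have s: "cnj S * S = (\<Sum>i\<in>J. \<Sum>j\<in>J. cnj (v$i) * v$j)" by simp
          have t: "cnj (v$i) * (\<chi> i j. ?B$i$j - complex_of_real c)$i$j * v$j
                = cnj (v$i) * ?B$i$j * v$j - complex_of_real c * (cnj (v$i) * v$j)" for i j
            by (simp add: algebra_simps)
          show ?thesis unfolding q s t sum_distrib_left sum_subtractf ..
        qed
        have cwB: "cin w (?B *v zc) = complex_of_real c * cnj S"
        proof -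
          have "cin w (?B *v zc) = (\<Sum>k\<in>UNIV. cnj (w$k) * complex_of_real c)"
            unfolding Bzc cin_def
          proof (intro sum.cong refl)
            fix k show "cnj (w$k) * (\<chi> k. complex_of_real (r k))$k = cnj (w$k) * complex_of_real c"
              using rc[of k] wJ[of k] by (cases "k \<in> J") (auto simp: J_def)
          qed
          then show ?thesis unfolding S_def cnj_sum sum_distrib_left by (simp add: mult.commute)
        qed
        have czB: "cin zc (?B *v w) = complex_of_real c * S"
        proof -
          have "cin zc (?B *v w) = cnj (cin w (?B *v zc))"
            using herm_adj[OF hB, of zc w] cin_cnj[of "?B *v zc" w] by simp
          then show ?thesis using cwB by simp
        qed
        have czz: "cin zc (?B *v zc) = complex_of_real c"
        proof -
          have "cin zc (?B *v zc) = (\<Sum>k\<in>UNIV. complex_of_real (z k) * complex_of_real (r k))"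
            unfolding Bzc unfolding cin_def zc_def vec_lambda_beta complex_cnj_complex_of_real ..
          also have "\<dots> = complex_of_real (\<Sum>k\<in>UNIV. z k * r k)"
            unfolding of_real_sum of_real_mult ..
          finally have "cin zc (?B *v zc) = complex_of_real (\<Sum>k\<in>UNIV. z k * r k)" .
          then show ?thesis using gzr gx by simp
        qed
        have "qf ?B (w - S *s zc) = qf ?B w - S * cin w (?B *v zc) - cnj S * cin zc (?B *v w) + cnj S * S * cin zc (?B *v zc)"
          apply (simp only: qf_cin mv_diff mv_scale cin_diff_left cin_diff_right cin_scale_left cin_scale_right)
          apply (simp add: algebra_simps)
          done
        also have "\<dots> = qf ?B w - complex_of_real c * (cnj S * S)"
          unfolding cwB czB czz by (simp add: algebra_simps)
        finally have "qf ?B (w - S *s zc) = qf ?B w - complex_of_real c * (cnj S * S)" .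
        then have "0 \<le> Re (qf ?B w - complex_of_real c * (cnj S * S))"
          using pB by (metis psd_iff)
        then show "0 \<le> Re (\<Sum>i\<in>J. \<Sum>j\<in>J. cnj (v$i) * (\<chi> i j. ?B$i$j - complex_of_real c)$i$j * v$j)"
          unfolding e1 .
      qed
    qed
  next
    fix l assume "l \<in> {l. 0 \<le> l \<and> psd_on J (\<chi> i j. ?B$i$j - complex_of_real l)}"
    then have "psd_on J (\<chi> i j. ?B$i$j - complex_of_real l)" by simp
    then have "0 \<le> Re (\<Sum>i\<in>J. \<Sum>j\<in>J. cnj (zc$i) * (\<chi> i j. ?B$i$j - complex_of_real l)$i$j * zc$j)"
      unfolding psd_on_def by blast
    moreover have "zc = (\<chi> i. if i \<in> J then zc$i else 0)"
      by (simp add: vec_eq_iff zc_def zJ)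
    moreover have "(\<Sum>i\<in>UNIV. \<Sum>j\<in>UNIV. cnj (zc$i) * (\<chi> i j. ?B$i$j - complex_of_real l)$i$j * zc$j)
       = (\<Sum>i\<in>J. \<Sum>j\<in>J. cnj (zc$i) * (\<chi> i j. ?B$i$j - complex_of_real l)$i$j * zc$j)"
      by (rule restr_sum) fact
    ultimately have "0 \<le> Re (\<Sum>i\<in>UNIV. \<Sum>j\<in>UNIV. cnj (zc$i) * (\<chi> i j. ?B$i$j - complex_of_real l)$i$j * zc$j)"
      by simp
    also have "(\<Sum>i\<in>UNIV. \<Sum>j\<in>UNIV. cnj (zc$i) * (\<chi> i j. ?B$i$j - complex_of_real l)$i$j * zc$j)
        = complex_of_real ((\<Sum>i\<in>UNIV. \<Sum>j\<in>UNIV. z i * b i j * z j) - l * ((\<Sum>i\<in>UNIV. z i) * (\<Sum>j\<in>UNIV. z j)))"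
    proof -
      have t: "cnj (zc$i) * (\<chi> i j. ?B$i$j - complex_of_real l)$i$j * zc$j
            = complex_of_real (z i * b i j * z j - l * (z i * z j))" for i j
        by (simp add: zc_def Bij algebra_simps)
      have zz1: "(\<Sum>j\<in>UNIV. l * (z i * z j)) = l * z i" for i
      proof -
        have "(\<Sum>j\<in>UNIV. l * (z i * z j)) = (l * z i) * (\<Sum>j\<in>UNIV. z j)"
          by (simp add: sum_distrib_left mult.assoc)
        then show ?thesis using Sz by simp
      qed
      have zz: "(\<Sum>i\<in>UNIV. \<Sum>j\<in>UNIV. l * (z i * z j)) = l"
        unfolding zz1 using Sz by (simp add: sum_distrib_left[symmetric])
      have "(\<Sum>i\<in>UNIV. \<Sum>j\<in>UNIV. z i * b i j * z j - l * (z i * z j))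
          = (\<Sum>i\<in>UNIV. \<Sum>j\<in>UNIV. z i * b i j * z j) - l * ((\<Sum>i\<in>UNIV. z i) * (\<Sum>j\<in>UNIV. z j))"
        unfolding sum_subtractf zz Sz by simp
      then show ?thesis unfolding t of_real_sum[symmetric] by simp
    qed
    also have "(\<Sum>i\<in>UNIV. \<Sum>j\<in>UNIV. z i * b i j * z j) = c"
      unfolding gx[symmetric] gfun_def b_def z_def by (intro sum.cong refl) (simp add: mult_ac)
    finally show "l \<le> c" using Sz by simp
  qed
  show ?thesis
    unfolding vec_eq_iff J_def[symmetric] Isub_eq
  proof
    fix k
    have "(hadamard ?B (outer x) *v (\<chi> i. complex_of_real (x$i)))$k = complex_of_real (x$k * r k)"
    proof -
      have t: "(hadamard ?B (outer x))$k$l * complex_of_real (x$l) = complex_of_real (x$k * (b k l * z l))" for l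
      proof -
        have h: "(hadamard ?B (outer x))$k$l = ?B$k$l * outer x$k$l"
          unfolding hadamard_def[of ?B] by (rule vec_lambda_beta_2)
        show ?thesis unfolding h unfolding Bij outer_def by (simp add: z_def power2_eq_square mult_ac)
      qed
      show ?thesis unfolding matrix_vector_mult_def vec_lambda_beta t r_def sum_distrib_left of_real_sum ..
    qed
    also have "\<dots> = (complex_of_real c *s (\<chi> i. complex_of_real (x$i)))$k"
      using rc[of k] by (cases "x$k = 0") (auto simp: mult.commute)
    finally show "(hadamard ?B (outer x) *v (\<chi> i. complex_of_real (x$i)))$k = (complex_of_real c *s (\<chi> i. complex_of_real (x$i)))$k" .
  qed
qed


theorem proposition3p2:
  fixes A :: "complex^'n::finite^'n"
  assumes "psd A"
  defines "B \<equiv> hadamard A (conj_mat A)"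
  shows "(\<exists>x::real^'n. (\<forall>i. 0 \<le> x$i) \<and> norm x = 1 \<and> frob (hadamard A (outer x)) = I2 A)
    \<and> (\<forall>x::real^'n. (\<forall>i. 0 \<le> x$i) \<and> norm x = 1 \<and> frob (hadamard A (outer x)) = I2 A \<longrightarrow>
         (let J = {i. x$i \<noteq> 0} in
            hadamard B (outer x) *v (\<chi> i. complex_of_real (x$i))
              = complex_of_real (Isub J B) *s (\<chi> i. complex_of_real (x$i))))"
proof (intro conjI allI impI)
  show "\<exists>x::real^'n. (\<forall>i. 0 \<le> x$i) \<and> norm x = 1 \<and> frob (hadamard A (outer x)) = I2 A"
    by (rule part1[OF assms(1)])
next
  fix x :: "real^'n"
  assume H: "(\<forall>i. 0 \<le> x$i) \<and> norm x = 1 \<and> frob (hadamard A (outer x)) = I2 A"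
  have mn: "\<forall>y. norm y = 1 \<longrightarrow> gfun A x \<le> gfun A y"
    using I2_min[of A x] H by blast
  have nx: "norm x = 1" using H by blast
  show "let J = {i. x$i \<noteq> 0} in
            hadamard B (outer x) *v (\<chi> i. complex_of_real (x$i))
              = complex_of_real (Isub J B) *s (\<chi> i. complex_of_real (x$i))"
    unfolding Let_def B_def by (rule part2[OF assms(1) nx mn])
qed

end
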